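(* Let $K$ be a non-empty compact Hausdorff space, and let $P\colon C(K)\to C(K)$ be a positive linear projection (i.e. $P^2=P$ and $Pf\ge 0$ whenever $f\ge 0$) with $P\mathbb{1}_K=\mathbb{1}_K$. Suppose there exists $\alpha\ge 0$ such that: (i) $\alpha\,\mathrm{id}_{C(K)}\le P$ (i.e. $Pf-\alpha f\ge 0$ for all $f\in C(K)_+$), and (ii) whenever $f\in C(K)$ satisfies $0\le M_f\le P$, then $\|f\|_\infty\le\alpha$. Then either $\alpha=0$ or $\alpha=1/n$ for some $n\in\mathbb{N}$.
   Context: $C(K)$ is the Banach lattice of real-valued continuous functions on $K$ with the pointwise order and sup norm; $\mathbb{1}_K$ is the constant function $1$. For $f\in C(K)$, $M_f\colon C(K)\to C(K)$ is the multiplication operator $M_f(g)=fg$. For operators $S,T$ on $C(K)$, $S\le T$ means $T-S$ is a positive operator. *)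

theory Defs
  imports "HOL-Analysis.Analysis"
begin

(* C(K) for compact K is modelled by the bounded continuous functions 'a =>C real
  (on a compact space every continuous function is bounded), with the sup norm. *)

definition nonneg_fun :: "('a::topological_space \<Rightarrow>\<^sub>C real) \<Rightarrow> bool" where
  "nonneg_fun f \<longleftrightarrow> (\<forall>x. 0 \<le> f x)"

definition positive_op :: "(('a::topological_space \<Rightarrow>\<^sub>C real) \<Rightarrow> ('a \<Rightarrow>\<^sub>C real)) \<Rightarrow> bool" where
  "positive_op T \<longleftrightarrow> (\<forall>f. nonneg_fun f \<longrightarrow> nonneg_fun (T f))"

definition op_le :: "(('a::topological_space \<Rightarrow>\<^sub>C real) \<Rightarrow> ('a \<Rightarrow>\<^sub>C real)) \<Rightarrow>
    (('a \<Rightarrow>\<^sub>C real) \<Rightarrow> ('a \<Rightarrow>\<^sub>C real)) \<Rightarrow> bool" where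
  "op_le S T \<longleftrightarrow> positive_op (\<lambda>g. T g - S g)"

definition mult_op :: "('a::topological_space \<Rightarrow>\<^sub>C real) \<Rightarrow> ('a \<Rightarrow>\<^sub>C real) \<Rightarrow> ('a \<Rightarrow>\<^sub>C real)" where
  "mult_op f g = Bcontfun (\<lambda>x. f x * g x)"

end

theory Submission imports Defs begin
lemma hd_t2: "Hausdorff_space (euclidean :: 'a::t2_space topology)"
proof -
  have "\<exists>U V. open U \<and> open V \<and> x \<in> U \<and> y \<in> V \<and> disjnt U V" if "x \<noteq> y" for x y :: 'a
    using hausdorff[OF that] unfolding disjnt_def by blast
  then show ?thesis unfolding Hausdorff_space_def by simp
qed
lemma normal_eu:
  assumes "compact (UNIV :: 'a::t2_space set)"
  shows "normal_space (euclidean :: 'a topology)"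
proof (rule compact_Hausdorff_or_regular_imp_normal_space)
  show "compact_space (euclidean :: 'a topology)" using assms by (simp add: compact_space_def)
  show "Hausdorff_space (euclidean :: 'a topology) \<or> regular_space (euclidean :: 'a topology)" by (rule disjI1, rule hd_t2)
qed
lemma urysohn_bump:
  assumes "compact (UNIV :: 'a::t2_space set)" "open V" "(z::'a) \<in> V"
  obtains b where "continuous_on UNIV b" "\<And>y. 0 \<le> b y" "\<And>y. b y \<le> (1::real)" "b z = 1" "\<And>y. y \<notin> V \<Longrightarrow> b y = 0"
proof -
  have "closedin euclidean (- V)" using assms by (simp add: closed_open)
  moreover have "closedin euclidean {z}" by simp
  moreover have "disjnt (- V) {z}" using assms by (auto simp: disjnt_def)
  ultimately obtain f where f: "continuous_map euclidean (top_of_set {0..1::real}) f" "f ` (- V) \<subseteq> {0}" "f ` {z} \<subseteq> {1}"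
    using Urysohn_lemma[OF normal_eu[OF assms(1)], of "- V" "{z}" 0 1] by auto
  have fm: "continuous_map euclidean euclidean f \<and> f ` topspace euclidean \<subseteq> {0..1}"
    using f(1) continuous_map_in_subtopology by blast
  then have c: "continuous_on UNIV f" by simp
  have rr: "range f \<subseteq> {0..1}" using fm by simp
  have r: "\<And>y. f y \<in> {0..1}" using rr by blast
  show ?thesis
  proof (rule that[of f])
    show "continuous_on UNIV f" by (rule c)
    show "\<And>y. 0 \<le> f y" using r by auto
    show "\<And>y. f y \<le> 1" using r by auto
    show "f z = 1" using f(3) by auto
    show "\<And>y. y \<notin> V \<Longrightarrow> f y = 0" using f(2) by auto
  qed
qed

lemma finite_sep:
  fixes S :: "'a::t2_space set"
  assumes "finite S"
  obtains V where "\<And>z. z \<in> S \<Longrightarrow> open (V z) \<and> z \<in> V z"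
    "\<And>z z'. z \<in> S \<Longrightarrow> z' \<in> S \<Longrightarrow> z \<noteq> z' \<Longrightarrow> V z \<inter> V z' = {}"
proof -
  define UW where "UW a b = (SOME p. open (fst p) \<and> open (snd p) \<and> a \<in> fst p \<and> b \<in> snd p \<and> fst p \<inter> snd p = {})" for a b :: 'a
  define U where "U a b = fst (UW a b)" for a b
  define W where "W a b = snd (UW a b)" for a b
  have UW: "open (U a b) \<and> open (W a b) \<and> a \<in> U a b \<and> b \<in> W a b \<and> U a b \<inter> W a b = {}" if ab: "a \<noteq> b" for a b
  proof -
    obtain U0 W0 where "open U0" "open W0" "a \<in> U0" "b \<in> W0" "U0 \<inter> W0 = {}"
      using hausdorff[OF ab] by blast
    then have "\<exists>p. open (fst p) \<and> open (snd p) \<and> a \<in> fst p \<and> b \<in> snd p \<and> fst p \<inter> snd p = {}"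
      by (intro exI[of _ "(U0, W0)"]) simp
    from someI_ex[OF this] show ?thesis unfolding U_def W_def UW_def .
  qed
  define V where "V z = (\<Inter>z'\<in>S-{z}. U z z') \<inter> (\<Inter>z'\<in>S-{z}. W z' z)" for z
  show ?thesis
  proof (rule that)
    fix z assume "z \<in> S"
    have h: "open (U z z') \<and> open (W z' z) \<and> z \<in> U z z' \<and> z \<in> W z' z" if "z' \<in> S - {z}" for z'
    proof -
      have "z \<noteq> z'" "z' \<noteq> z" using that by auto
      then show ?thesis using UW[of z z'] UW[of z' z] by blast
    qed
    show "open (V z) \<and> z \<in> V z"
      unfolding V_def using h assms by (auto intro!: open_Int open_INT)
  next
    fix z z' assume "z \<in> S" "z' \<in> S" "z \<noteq> z'"
    have "V z \<subseteq> U z z'" "V z' \<subseteq> W z z'" unfolding V_def using \<open>z \<in> S\<close> \<open>z' \<in> S\<close> \<open>z \<noteq> z'\<close> by auto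
    then show "V z \<inter> V z' = {}" using UW[OF \<open>z \<noteq> z'\<close>] by blast
  qed
qed

lemma finite_bumps:
  fixes S :: "'a::t2_space set"
  assumes "compact (UNIV :: 'a set)" "finite S"
  obtains V b where "\<And>z. z \<in> S \<Longrightarrow> open (V z) \<and> z \<in> V z"
    "\<And>z z'. z \<in> S \<Longrightarrow> z' \<in> S \<Longrightarrow> z \<noteq> z' \<Longrightarrow> V z \<inter> V z' = {}"
    "\<And>z. z \<in> S \<Longrightarrow> continuous_on UNIV (b z)"
    "\<And>z y. z \<in> S \<Longrightarrow> 0 \<le> b z y" "\<And>z y. z \<in> S \<Longrightarrow> b z y \<le> (1::real)"
    "\<And>z. z \<in> S \<Longrightarrow> b z z = 1"
    "\<And>z y. z \<in> S \<Longrightarrow> y \<notin> V z \<Longrightarrow> b z y = 0"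
proof -
  obtain V where V: "\<And>z. z \<in> S \<Longrightarrow> open (V z) \<and> z \<in> V z"
    "\<And>z z'. z \<in> S \<Longrightarrow> z' \<in> S \<Longrightarrow> z \<noteq> z' \<Longrightarrow> V z \<inter> V z' = {}"
    using finite_sep[OF assms(2)] by blast
  have "\<forall>z\<in>S. \<exists>c. continuous_on UNIV c \<and> (\<forall>y. 0 \<le> c y) \<and> (\<forall>y. c y \<le> (1::real)) \<and> c z = 1 \<and> (\<forall>y. y \<notin> V z \<longrightarrow> c y = 0)"
  proof
    fix z assume "z \<in> S"
    then obtain c where "continuous_on UNIV c" "\<And>y. 0 \<le> c y" "\<And>y. c y \<le> (1::real)" "c z = 1" "\<And>y. y \<notin> V z \<Longrightarrow> c y = 0"
      using urysohn_bump[OF assms(1), of "V z" z] V(1) by metis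
    then show "\<exists>c. continuous_on UNIV c \<and> (\<forall>y. 0 \<le> c y) \<and> (\<forall>y. c y \<le> (1::real)) \<and> c z = 1 \<and> (\<forall>y. y \<notin> V z \<longrightarrow> c y = 0)"
      by (intro exI[of _ c]) auto
  qed
  then obtain b where "\<forall>z\<in>S. continuous_on UNIV (b z) \<and> (\<forall>y. 0 \<le> b z y) \<and> (\<forall>y. b z y \<le> (1::real)) \<and> b z z = 1 \<and> (\<forall>y. y \<notin> V z \<longrightarrow> b z y = 0)"
    by (rule bchoice[elim_format]) blast
  then show ?thesis by (intro that[of V b]) (use V in auto)
qed

lemma sum_disj_le1:
  fixes b :: "'a \<Rightarrow> 'b \<Rightarrow> real"
  assumes "finite S"
    "\<And>z z'. z \<in> S \<Longrightarrow> z' \<in> S \<Longrightarrow> z \<noteq> z' \<Longrightarrow> V z \<inter> V z' = {}"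
    "\<And>z y. z \<in> S \<Longrightarrow> b z y \<le> 1"
    "\<And>z y. z \<in> S \<Longrightarrow> y \<notin> V z \<Longrightarrow> b z y = 0"
  shows "(\<Sum>z\<in>S. b z y) \<le> 1"
proof (cases "\<exists>z0\<in>S. y \<in> V z0")
  case True
  then obtain z0 where z0: "z0 \<in> S" "y \<in> V z0" by blast
  have "(\<Sum>z\<in>S. b z y) = b z0 y + (\<Sum>z\<in>S-{z0}. b z y)"
    using sum.remove[OF assms(1) z0(1)] by simp
  also have "(\<Sum>z\<in>S-{z0}. b z y) = 0"
  proof (rule sum.neutral, rule ballI)
    fix z assume "z \<in> S - {z0}"
    then have "y \<notin> V z" using assms(2)[of z z0] z0 by auto
    then show "b z y = 0" using assms(4) \<open>z \<in> S - {z0}\<close> by auto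
  qed
  finally show ?thesis using assms(3)[OF z0(1)] by simp
next
  case False
  then have "(\<Sum>z\<in>S. b z y) = 0" using assms(4) by (intro sum.neutral) auto
  then show ?thesis by simp
qed


lemma sum_apply_bc: "apply_bcontfun (sum f S) x = (\<Sum>i\<in>S. apply_bcontfun (f i) x)"
  by (induction S rule: infinite_finite_induct) auto

locale PP =
  fixes P :: "('a::t2_space \<Rightarrow>\<^sub>C real) \<Rightarrow> ('a \<Rightarrow>\<^sub>C real)" and \<alpha> :: real
  assumes cpt: "compact (UNIV :: 'a set)"
    and lin: "linear P"
    and idem: "\<And>f. P (P f) = P f"
    and pos: "positive_op P"
    and unit: "P (const_bcontfun 1) = const_bcontfun 1"
    and apos: "\<alpha> > 0"
    and low: "op_le (\<lambda>g. \<alpha> *\<^sub>R g) P"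
    and diag: "\<And>f. op_le (\<lambda>g. 0) (mult_op f) \<Longrightarrow> op_le (mult_op f) P \<Longrightarrow> norm f \<le> \<alpha>"
begin

lemma bc_apply: "continuous_on UNIV f \<Longrightarrow> apply_bcontfun (Bcontfun f) = (f :: 'a \<Rightarrow> real)"
  by (rule Bcontfun_inverse)
     (auto simp: bcontfun_def intro: compact_imp_bounded compact_continuous_image cpt)

lemma P_add: "P (a + b) = P a + P b" using lin by (simp add: linear_add)
lemma P_diff: "P (a - b) = P a - P b" using lin by (simp add: linear_diff)
lemma P_scale: "P (c *\<^sub>R a) = c *\<^sub>R P a" using lin by (simp add: linear_scale)
lemma P_neg: "P (- a) = - P a" using lin by (simp add: linear_neg)
lemma P_sum: "P (sum f S) = (\<Sum>i\<in>S. P (f i))" using lin by (simp add: linear_sum)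

lemma P_nonneg: "(\<And>y. 0 \<le> apply_bcontfun g y) \<Longrightarrow> 0 \<le> P g x"
  using pos by (auto simp: positive_op_def nonneg_fun_def)

lemma P_mono: "(\<And>y. apply_bcontfun a y \<le> apply_bcontfun b y) \<Longrightarrow> P a x \<le> P b x"
  using P_nonneg[of "b - a" x] by (simp add: P_diff)

lemma P_low: "(\<And>y. 0 \<le> apply_bcontfun g y) \<Longrightarrow> \<alpha> * g x \<le> P g x"
  using low by (auto simp: op_le_def positive_op_def nonneg_fun_def)

lemma P_const: "P (const_bcontfun c) = const_bcontfun c"
proof -
  have e: "const_bcontfun c = c *\<^sub>R (const_bcontfun 1 :: 'a \<Rightarrow>\<^sub>C real)" by (rule bcontfun_eqI) simp
  have "P (c *\<^sub>R const_bcontfun 1) = c *\<^sub>R const_bcontfun 1" by (simp add: P_scale unit)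
  then show ?thesis using e by simp
qed

definition sq :: "('a \<Rightarrow>\<^sub>C real) \<Rightarrow> ('a \<Rightarrow>\<^sub>C real)" where
  "sq h = Bcontfun (\<lambda>x. h x * h x)"

lemma sq_apply[simp]: "apply_bcontfun (sq h) x = h x * h x"
  unfolding sq_def by (subst bc_apply) (auto intro!: continuous_intros)

lemma sq_shift: "sq (h - const_bcontfun c) = sq h - (2*c) *\<^sub>R h + const_bcontfun (c*c)"
  by (rule bcontfun_eqI) (simp add: algebra_simps)

lemma CS: "P h x * P h x \<le> P (sq h) x"
proof -
  define c where "c = P h x"
  have "0 \<le> P (sq (h - const_bcontfun c)) x" by (rule P_nonneg) simp
  also have "P (sq (h - const_bcontfun c)) x = P (sq h) x - 2 * c * P h x + c * c"
    by (simp add: sq_shift P_add P_diff P_scale P_const)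
  finally show ?thesis unfolding c_def by simp
qed

lemma alg: "P (sq (P k)) = sq (P k)"
proof -
  define h where "h = P k"
  have Ph: "P h = h" unfolding h_def by (rule idem)
  define d where "d = P (sq h) - sq h"
  have d0: "0 \<le> d y" for y
    using CS[of h y] unfolding d_def Ph by simp
  have Pd: "P d = 0" unfolding d_def by (simp add: P_diff idem)
  have "d y = 0" for y
  proof -
    have "\<alpha> * d y \<le> P d y" by (rule P_low) (rule d0)
    then have "d y \<le> 0" using apos Pd by (simp add: mult_le_0_iff)
    then show ?thesis using d0[of y] by simp
  qed
  then show ?thesis unfolding d_def h_def[symmetric] by (intro bcontfun_eqI) simp
qed

definition fib :: "'a \<Rightarrow> 'a set" where
  "fib x = {y. \<forall>g. P g y = P g x}"

lemma fib_refl: "x \<in> fib x" by (simp add: fib_def)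
lemma fib_eq: "y \<in> fib x \<Longrightarrow> P g y = P g x" by (simp add: fib_def)
lemma fib_fib: "y \<in> fib x \<Longrightarrow> fib y = fib x" by (auto simp: fib_def)

lemma kill: "P (sq (P k - const_bcontfun (P k x))) x = 0"
proof -
  have "P (sq (P k - const_bcontfun (P k x))) x = P (sq (P k)) x - 2 * P k x * P (P k) x + P k x * P k x"
    by (simp add: sq_shift P_add P_diff P_scale P_const)
  then show ?thesis by (simp add: alg idem)
qed


lemma FL_eps:
  fixes g :: "'a \<Rightarrow>\<^sub>C real"
  assumes g0: "\<And>y. y \<in> fib x \<Longrightarrow> g y = 0" and e: "\<epsilon> > 0"
  shows "\<bar>P g x\<bar> \<le> \<epsilon>"
proof -
  define C where "C = {y. \<epsilon> \<le> \<bar>g y\<bar>}"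
  have "closed C" unfolding C_def by (intro closed_Collect_le continuous_intros) auto
  then have cC: "compact C" using compact_Int_closed[OF cpt, of C] by simp
  have "\<forall>y\<in>C. \<exists>q. (\<forall>w. 0 \<le> apply_bcontfun q w) \<and> 0 < q y \<and> P q x = 0"
  proof
    fix y assume "y \<in> C"
    then have "y \<notin> fib x" using g0 e unfolding C_def by force
    then obtain k where k: "P k y \<noteq> P k x" unfolding fib_def by auto
    define q where "q = sq (P k - const_bcontfun (P k x))"
    have kk: "P k y - P k x \<noteq> 0" using k by simp
    have "\<forall>w. 0 \<le> apply_bcontfun q w" unfolding q_def by simp
    moreover have "0 < q y" unfolding q_def using kk by (simp only: sq_apply minus_bcontfun.rep_eq const_bcontfun.rep_eq) (metis not_real_square_gt_zero)
    moreover have "P q x = 0" unfolding q_def by (rule kill)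
    ultimately show "\<exists>q. (\<forall>w. 0 \<le> apply_bcontfun q w) \<and> 0 < q y \<and> P q x = 0" by blast
  qed
  then obtain Q where Q: "\<And>y. y \<in> C \<Longrightarrow> (\<forall>w. 0 \<le> apply_bcontfun (Q y) w) \<and> 0 < Q y y \<and> P (Q y) x = 0"
    by metis
  have cov: "C \<subseteq> (\<Union>y\<in>C. {w. 0 < Q y w})" using Q by auto
  have opn: "\<And>y. y \<in> C \<Longrightarrow> open {w. 0 < Q y w}"
    by (intro open_Collect_less continuous_intros) auto
  obtain F where F: "F \<subseteq> C" "finite F" "C \<subseteq> (\<Union>y\<in>F. {w. 0 < Q y w})"
    using compactE_image[OF cC opn cov] by metis
  define H where "H = (\<Sum>y\<in>F. Q y)"
  have Hap: "H w = (\<Sum>y\<in>F. Q y w)" for w unfolding H_def by (simp add: sum_apply_bc)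
  have H0: "0 \<le> H w" for w unfolding Hap using F Q by (intro sum_nonneg) auto
  have HC: "0 < H w" if "w \<in> C" for w
  proof -
    have "w \<in> (\<Union>y\<in>F. {w. 0 < Q y w})" using F(3) that by blast
    then obtain y where y: "y \<in> F" "0 < Q y w" by blast
    have "Q y w \<le> (\<Sum>y\<in>F. Q y w)"
      using F Q y by (intro member_le_sum) auto
    then show ?thesis unfolding Hap using y by simp
  qed
  have PH: "P H x = 0" unfolding H_def P_sum sum_apply_bc using F Q by (intro sum.neutral) auto
  obtain K where K0: "0 \<le> K" and bound: "\<And>w. \<bar>g w\<bar> \<le> \<epsilon> + K * H w"
  proof (cases "C = {}")
    case True
    then have "\<bar>g w\<bar> \<le> \<epsilon> + 0 * H w" for w unfolding C_def using not_le[of \<epsilon> "\<bar>g w\<bar>"] by auto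
    then show ?thesis using that[of 0] by auto
  next
    case False
    have "continuous_on C (apply_bcontfun H)" by auto
    then obtain w0 where w0: "w0 \<in> C" "\<And>w. w \<in> C \<Longrightarrow> H w0 \<le> H w"
      using continuous_attains_inf[OF cC False] by metis
    define \<delta> where "\<delta> = H w0"
    have d0: "0 < \<delta>" unfolding \<delta>_def using HC w0 by auto
    have "\<bar>g w\<bar> \<le> \<epsilon> + (norm g / \<delta>) * H w" for w
    proof (cases "w \<in> C")
      case True
      have "\<bar>g w\<bar> \<le> norm g" using norm_bounded[of g w] by simp
      also have "norm g = (norm g / \<delta>) * \<delta>" using d0 by simp
      also have "\<dots> \<le> (norm g / \<delta>) * H w" using w0(2)[OF True] d0
        by (intro mult_left_mono) (auto simp: \<delta>_def)
      finally show ?thesis using e by simp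
    next
      case False
      then have "\<bar>g w\<bar> \<le> \<epsilon>" unfolding C_def by auto
      moreover have "0 \<le> (norm g / \<delta>) * H w" using H0 d0 by simp
      ultimately show ?thesis by simp
    qed
    then show ?thesis using that[of "norm g / \<delta>"] d0 by simp
  qed
  define B where "B = const_bcontfun \<epsilon> + K *\<^sub>R H"
  have PB: "P B x = \<epsilon>" unfolding B_def by (simp add: P_add P_scale P_const PH)
  have "P g x \<le> P B x" by (rule P_mono) (use bound in \<open>simp add: B_def abs_le_iff\<close>)
  moreover have "P (- B) x \<le> P g x"
  proof (rule P_mono)
    fix y show "apply_bcontfun (- B) y \<le> g y" using bound[of y] by (simp add: B_def abs_le_iff)
  qed
  ultimately show ?thesis using PB by (simp add: P_neg)
qed

lemma FL: fixes g :: "'a \<Rightarrow>\<^sub>C real" assumes "\<And>y. y \<in> fib x \<Longrightarrow> g y = 0" shows "P g x = 0"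
proof (rule ccontr)
  assume "P g x \<noteq> 0"
  then have "\<bar>P g x\<bar> \<le> \<bar>P g x\<bar> / 2" using FL_eps[OF assms, where \<epsilon> = "\<bar>P g x\<bar> / 2"] by simp
  moreover have "0 < \<bar>P g x\<bar>" using \<open>P g x \<noteq> 0\<close> by simp
  ultimately show False by linarith
qed

lemma FL': fixes a b :: "'a \<Rightarrow>\<^sub>C real" assumes "\<And>y. y \<in> fib x \<Longrightarrow> a y = b y" shows "P a x = P b x"
  using FL[of x "a - b"] assms by (simp add: P_diff)


lemma F2:
  assumes S: "finite S" "S \<subseteq> fib x"
  shows "real (card S) * \<alpha> \<le> 1"
proof -
  obtain V b where V: "\<And>z. z \<in> S \<Longrightarrow> open (V z) \<and> z \<in> V z"
    "\<And>z z'. z \<in> S \<Longrightarrow> z' \<in> S \<Longrightarrow> z \<noteq> z' \<Longrightarrow> V z \<inter> V z' = {}"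
    and b: "\<And>z. z \<in> S \<Longrightarrow> continuous_on UNIV (b z)"
    "\<And>z y. z \<in> S \<Longrightarrow> 0 \<le> b z y" "\<And>z y. z \<in> S \<Longrightarrow> b z y \<le> (1::real)"
    "\<And>z. z \<in> S \<Longrightarrow> b z z = 1"
    "\<And>z y. z \<in> S \<Longrightarrow> y \<notin> V z \<Longrightarrow> b z y = 0"
    by (rule finite_bumps[OF cpt S(1)]) blast
  define B where "B = (\<Sum>z\<in>S. Bcontfun (b z))"
  have Bap: "B y = (\<Sum>z\<in>S. b z y)" for y
    unfolding B_def sum_apply_bc using b(1) by (intro sum.cong) (auto simp: bc_apply)
  have "P B x \<le> P (const_bcontfun 1) x"
  proof (rule P_mono)
    fix y
    have "(\<Sum>z\<in>S. b z y) \<le> 1" by (rule sum_disj_le1[OF S(1) V(2) b(3) b(5)]) auto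
    then show "B y \<le> apply_bcontfun (const_bcontfun 1) y" by (simp add: Bap)
  qed
  then have "P B x \<le> 1" by (simp add: unit)
  moreover have "P B x = (\<Sum>z\<in>S. P (Bcontfun (b z)) z)"
    unfolding B_def P_sum sum_apply_bc using S by (intro sum.cong) (auto simp: fib_eq)
  moreover have "(\<Sum>z\<in>S. \<alpha>) \<le> (\<Sum>z\<in>S. P (Bcontfun (b z)) z)"
  proof (rule sum_mono)
    fix z assume z: "z \<in> S"
    have "\<alpha> * Bcontfun (b z) z \<le> P (Bcontfun (b z)) z"
      by (rule P_low) (use b z in \<open>simp add: bc_apply\<close>)
    then show "\<alpha> \<le> P (Bcontfun (b z)) z" using b z by (simp add: bc_apply)
  qed
  ultimately show ?thesis by (simp add: mult.commute)
qed

lemma fib_finite: "finite (fib x)"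
proof (rule ccontr)
  assume "infinite (fib x)"
  then obtain S where S: "finite S" "card S = nat \<lceil>1/\<alpha>\<rceil> + 1" "S \<subseteq> fib x"
    using infinite_arbitrarily_large by metis
  have "real (card S) * \<alpha> \<le> 1" by (rule F2[OF S(1) S(3)])
  moreover have "1 / \<alpha> < real (card S)" using S(2) real_nat_ceiling_ge[of "1/\<alpha>"] by simp
  then have "1 < real (card S) * \<alpha>" using apos by (simp add: field_simps)
  ultimately show False by simp
qed

lemma fib_card: "card (fib x) \<le> nat \<lceil>1/\<alpha>\<rceil>"
proof -
  have "real (card (fib x)) * \<alpha> \<le> 1" by (rule F2[OF fib_finite order_refl])
  then have "real (card (fib x)) \<le> 1/\<alpha>" using apos by (simp add: field_simps)
  also have "\<dots> \<le> real (nat \<lceil>1/\<alpha>\<rceil>)" by (rule real_nat_ceiling_ge)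
  finally show ?thesis by simp
qed



lemma result: "\<exists>n::nat. n \<ge> 1 \<and> \<alpha> = 1 / real n"
proof -
  define n0 where "n0 = Max (range (\<lambda>x. card (fib x)))"
  have fin: "finite (range (\<lambda>x. card (fib x)))"
    by (rule finite_subset[of _ "{..nat \<lceil>1/\<alpha>\<rceil>}"]) (auto simp: fib_card)
  have "n0 \<in> range (\<lambda>x. card (fib x))" unfolding n0_def by (rule Max_in[OF fin]) auto
  then obtain x0 where x0: "card (fib x0) = n0" by auto
  have maxc: "card (fib x) \<le> n0" for x unfolding n0_def by (rule Max_ge[OF fin]) auto
  define Z where "Z = fib x0"
  have Zf: "finite Z" unfolding Z_def by (rule fib_finite)
  have x0Z: "x0 \<in> Z" unfolding Z_def by (rule fib_refl)
  obtain V b where V: "\<And>z. z \<in> Z \<Longrightarrow> open (V z) \<and> z \<in> V z"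
    "\<And>z z'. z \<in> Z \<Longrightarrow> z' \<in> Z \<Longrightarrow> z \<noteq> z' \<Longrightarrow> V z \<inter> V z' = {}"
    and b: "\<And>z. z \<in> Z \<Longrightarrow> continuous_on UNIV (b z)"
    "\<And>z y. z \<in> Z \<Longrightarrow> 0 \<le> b z y" "\<And>z y. z \<in> Z \<Longrightarrow> b z y \<le> (1::real)"
    "\<And>z. z \<in> Z \<Longrightarrow> b z z = 1"
    "\<And>z y. z \<in> Z \<Longrightarrow> y \<notin> V z \<Longrightarrow> b z y = 0"
    by (rule finite_bumps[OF cpt Zf]) blast
  define bb where "bb z = Bcontfun (b z)" for z
  have bb_ap: "z \<in> Z \<Longrightarrow> apply_bcontfun (bb z) = b z" for z unfolding bb_def using b(1) by (simp add: bc_apply)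
  define e where "e z = Bcontfun (\<lambda>y. min 1 (2 * b z y))" for z
  have e_ap: "z \<in> Z \<Longrightarrow> apply_bcontfun (e z) y = min 1 (2 * b z y)" for z y
    unfolding e_def using b(1) by (subst bc_apply) (auto intro!: continuous_intros)
  have e01: "z \<in> Z \<Longrightarrow> 0 \<le> e z y \<and> e z y \<le> 1" for z y using e_ap b(2) by simp
  have e_out: "z \<in> Z \<Longrightarrow> y \<notin> V z \<Longrightarrow> e z y = 0" for z y using e_ap b(5) by simp
  have e_in: "z \<in> Z \<Longrightarrow> 1/2 < b z y \<Longrightarrow> e z y = 1" for z y using e_ap by simp
  have Pbpos: "0 < P (bb j) z" if "j \<in> Z" "z \<in> Z" for j z
  proof -
    have "P (bb j) z = P (bb j) j" using that unfolding Z_def by (simp add: fib_eq)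
    moreover have "\<alpha> * bb j j \<le> P (bb j) j" by (rule P_low) (use that b in \<open>simp add: bb_ap\<close>)
    ultimately show ?thesis using that apos b(4) bb_ap by simp
  qed
  define Ob where "Ob i = V i \<inter> {y. 1/2 < b i y} \<inter> (\<Inter>j\<in>Z. {y. 0 < P (bb j) y})" for i
  have O_open: "i \<in> Z \<Longrightarrow> open (Ob i)" for i
  proof -
    assume i: "i \<in> Z"
    have o1: "open (V i)" using V(1)[OF i] by simp
    have o2: "open {y. 1/2 < b i y}" by (rule open_Collect_less) (auto simp: b(1)[OF i])
    have o3: "open {y. 0 < P (bb j) y}" for j by (rule open_Collect_less) auto
    have o4: "open (\<Inter>j\<in>Z. {y. 0 < P (bb j) y})" using Zf o3 by (intro open_INT) auto
    show ?thesis unfolding Ob_def using o1 o2 o4 by (intro open_Int)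
  qed
  have O_in: "i \<in> Z \<Longrightarrow> i \<in> Ob i" for i
    unfolding Ob_def using V(1) b(4) Pbpos by auto
  have key: "P (e i) y * g y \<le> P g y" if i: "i \<in> Z" and y: "y \<in> Ob i" and g: "\<And>w. 0 \<le> apply_bcontfun g w" for i y g
  proof -
    have "\<exists>w\<in>fib y. w \<in> V j" if j: "j \<in> Z" for j
    proof (rule ccontr)
      assume "\<not> (\<exists>w\<in>fib y. w \<in> V j)"
      then have "P (bb j) y = 0" using j by (intro FL) (auto simp: bb_ap b(5))
      moreover have "0 < P (bb j) y" using y j unfolding Ob_def by auto
      ultimately show False by simp
    qed
    then obtain W where W: "\<And>j. j \<in> Z \<Longrightarrow> W j \<in> fib y \<and> W j \<in> V j" by metis
    define w' where "w' j = (if j = i then y else W j)" for j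
    have w': "j \<in> Z \<Longrightarrow> w' j \<in> fib y \<and> w' j \<in> V j" for j
      using W y fib_refl[of y] unfolding w'_def Ob_def by auto
    have inj: "inj_on w' Z"
    proof (rule inj_onI)
      fix j j' assume "j \<in> Z" "j' \<in> Z" "w' j = w' j'"
      then show "j = j'" using w'[of j] w'[of j'] V(2)[of j j'] by auto
    qed
    have "card Z \<le> card (fib y)"
      by (rule card_inj_on_le[OF inj]) (use w' fib_finite in auto)
    moreover have "card (fib y) \<le> card Z" using maxc x0 unfolding Z_def by simp
    ultimately have "card (w' ` Z) = card (fib y)" using card_image[OF inj] by simp
    then have img: "w' ` Z = fib y"
      by (intro card_subset_eq fib_finite) (use w' in auto)
    have other: "e i u = 0" if u: "u \<in> fib y" "u \<noteq> y" for u
    proof -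
      obtain j where j: "j \<in> Z" "u = w' j" using img u by auto
      have "j \<noteq> i" using j u unfolding w'_def by auto
      then have "u \<notin> V i" using V(2)[of j i] i j w'[of j] by auto
      then show ?thesis using e_out i by simp
    qed
    have yi: "e i y = 1" using e_in i y unfolding Ob_def by auto
    define G where "G = Bcontfun (\<lambda>w. g w * e i w)"
    have G_ap: "apply_bcontfun G w = g w * e i w" for w
      unfolding G_def by (subst bc_apply) (auto intro!: continuous_intros)
    have "P G y \<le> P g y"
    proof (rule P_mono)
      fix w show "G w \<le> g w" using G_ap e01[OF i, of w] g[of w] by (simp add: mult_left_le)
    qed
    moreover have "P G y = P ((g y) *\<^sub>R e i) y"
    proof (rule FL')
      fix u assume "u \<in> fib y"
      then show "G u = ((g y) *\<^sub>R e i) u" using other yi by (cases "u = y") (auto simp: G_ap)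
    qed
    ultimately show ?thesis by (simp add: P_scale mult.commute)
  qed
  have mle: "P (e i) x0 \<le> \<alpha>" if i: "i \<in> Z" for i
  proof -
    obtain k where k: "continuous_on UNIV k" "\<And>y. 0 \<le> k y" "\<And>y. k y \<le> (1::real)" "k i = 1"
      "\<And>y. y \<notin> Ob i \<Longrightarrow> k y = 0"
      using urysohn_bump[OF cpt O_open[OF i] O_in[OF i]] by blast
    define f where "f = Bcontfun (\<lambda>y. \<alpha> + k y * max 0 (P (e i) y - \<alpha>))"
    have f_ap: "apply_bcontfun f y = \<alpha> + k y * max 0 (P (e i) y - \<alpha>)" for y
      unfolding f_def using k(1) by (subst bc_apply) (auto intro!: continuous_intros)
    have f_pos: "\<alpha> \<le> f y" for y using f_ap k(2) by simp
    have mo: "apply_bcontfun (mult_op f g) y = f y * g y" for g y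
      unfolding mult_op_def by (subst bc_apply) (auto intro!: continuous_intros)
    have "op_le (\<lambda>g. 0) (mult_op f)"
      unfolding op_le_def positive_op_def nonneg_fun_def
    proof (intro allI impI)
      fix g :: "'a \<Rightarrow>\<^sub>C real" and y assume g: "\<forall>x. 0 \<le> g x"
      have "0 \<le> f y" using f_pos[of y] apos by simp
      then show "0 \<le> apply_bcontfun (mult_op f g - 0) y" using g by (simp add: mo)
    qed
    moreover have "op_le (mult_op f) P"
      unfolding op_le_def positive_op_def nonneg_fun_def
    proof (intro allI impI)
      fix g :: "'a \<Rightarrow>\<^sub>C real" and y assume g: "\<forall>x. 0 \<le> g x"
      have "f y * g y \<le> P g y"
      proof (cases "y \<in> Ob i")
        case True
        have "k y * max 0 (P (e i) y - \<alpha>) \<le> max 0 (P (e i) y - \<alpha>)"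
          by (rule mult_left_le_one_le) (use k(2,3)[of y] in auto)
        then have "f y \<le> max \<alpha> (P (e i) y)" using f_ap[of y] by (simp add: max_def split: if_splits)
        then have "f y * g y \<le> max \<alpha> (P (e i) y) * g y" using g by (simp add: mult_right_mono)
        also have "\<dots> \<le> P g y"
          using P_low[of g y] key[OF i True, of g] g by (auto simp: max_def mult.commute)
        finally show ?thesis .
      next
        case False
        then show ?thesis using P_low[of g y] g f_ap k(5) by (simp add: mult.commute)
      qed
      then show "0 \<le> apply_bcontfun (P g - mult_op f g) y" by (simp add: mo)
    qed
    ultimately have "norm f \<le> \<alpha>" by (rule diag)
    moreover have "f i \<le> norm f" using norm_bounded[of f i] by simp
    ultimately have "max 0 (P (e i) i - \<alpha>) \<le> 0" using f_ap[of i] k(4) by simp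
    moreover have "P (e i) i = P (e i) x0" using i unfolding Z_def by (simp add: fib_eq)
    ultimately show ?thesis by simp
  qed
  have "P (\<Sum>j\<in>Z. e j) x0 = P (const_bcontfun 1) x0"
  proof (rule FL')
    fix u assume u: "u \<in> fib x0"
    then have uZ: "u \<in> Z" unfolding Z_def .
    have "(\<Sum>j\<in>Z. e j u) = e u u + (\<Sum>j\<in>Z-{u}. e j u)" using sum.remove[OF Zf uZ] by simp
    also have "(\<Sum>j\<in>Z-{u}. e j u) = 0"
    proof (rule sum.neutral, rule ballI)
      fix j assume j: "j \<in> Z - {u}"
      then have "u \<notin> V j" using V(2)[of u j] V(1)[OF uZ] uZ by auto
      then show "e j u = 0" using e_out j by auto
    qed
    finally show "apply_bcontfun (\<Sum>j\<in>Z. e j) u = apply_bcontfun (const_bcontfun 1) u"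
      using e_in[OF uZ, of u] b(4)[OF uZ] by (simp add: sum_apply_bc)
  qed
  then have "(\<Sum>j\<in>Z. P (e j) x0) = 1" by (simp add: P_sum sum_apply_bc unit)
  moreover have "(\<Sum>j\<in>Z. P (e j) x0) \<le> real (card Z) * \<alpha>"
    using sum_bounded_above[of Z "\<lambda>j. P (e j) x0" \<alpha>] mle by simp
  ultimately have "1 \<le> real (card Z) * \<alpha>" by simp
  moreover have "real (card Z) * \<alpha> \<le> 1" by (rule F2[OF Zf, of x0]) (simp add: Z_def)
  ultimately have eq: "real (card Z) * \<alpha> = 1" by simp
  have c1: "card Z \<ge> 1" using Zf x0Z by (metis One_nat_def Suc_leI card_gt_0_iff empty_iff)
  moreover have "\<alpha> = 1 / real (card Z)" using eq c1 by (simp add: field_simps)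
  ultimately show ?thesis by blast
qed

end

theorem theorem2p1:
  fixes P :: "('a::t2_space \<Rightarrow>\<^sub>C real) \<Rightarrow> ('a \<Rightarrow>\<^sub>C real)"
    and \<alpha> :: real
  assumes "compact (UNIV :: 'a set)"
    and "linear P"
    and "\<And>f. P (P f) = P f"
    and "positive_op P"
    and "P (const_bcontfun 1) = const_bcontfun 1"
    and "\<alpha> \<ge> 0"
    and "op_le (\<lambda>g. \<alpha> *\<^sub>R g) P"
    and "\<And>f. op_le (\<lambda>g. 0) (mult_op f) \<Longrightarrow> op_le (mult_op f) P \<Longrightarrow> norm f \<le> \<alpha>"
  shows "\<alpha> = 0 \<or> (\<exists>n::nat. n \<ge> 1 \<and> \<alpha> = 1 / real n)"
proof (cases "\<alpha> = 0")
  case False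
  then have "\<alpha> > 0" using assms(6) by simp
  then have "PP P \<alpha>" using assms by (intro PP.intro) auto
  then interpret PP P \<alpha> .
  show ?thesis using result by blast
qed simp

end
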